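(* Fix $n$ and $l\ge1$, let $q=p_{l+1}$, and let $T^*\subseteq T$. Suppose $A^*\subseteq(2n/q,2n]$ is of the form $A^*=\bigcup_{t\in T^*}A_t$, where each $A_t$ is a maximum-size antichain of the poset $L(t)$ (under divisibility). Then $A^*$ can be extended to a primitive set $A$ with $|A|=n$ and $A^*\subseteq A\subseteq (2n/q,2n]\cap\mathbb Z$. Furthermore, the extension can be chosen so that distinct such $A^*$ give distinct $A$ (namely $A\cap\bigcup_{t\in T^*}L(t)=A^*$).
   Context: A set of positive integers is primitive if no element divides another. Let $p_1<p_2<\dots$ be the primes. $M_l$ is the set of positive integers all of whose prime factors lie in $\{p_1,\dots,p_l\}$, and $M_l(x)=\{m\in M_l:m\le x\}$. Let $T=\{t\in\{1,\dots,2n\}:\gcd(t,p_1p_2\cdots p_l)=1\}$, and for $t\in T$ let $L(t)=t\cdot M_l(2n/t)=\{tm: m\in M_l,\ tm\le 2n\}$, ordered by divisibility. *)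

theory Defs
  imports Complex_Main "HOL-Library.Infinite_Set" "HOL-Computational_Algebra.Primes"
begin

text \<open>The k-th prime p_k, 1-indexed: pr 1 = 2, pr 2 = 3, ...\<close>
definition pr :: "nat \<Rightarrow> nat" where
  "pr k = enumerate {p::nat. prime p} (k - 1)"

definition Msmooth :: "nat \<Rightarrow> nat set" where
  "Msmooth l = {m. m > 0 \<and> (\<forall>p. prime p \<and> p dvd m \<longrightarrow> p \<in> pr ` {1..l})}"

definition Tset :: "nat \<Rightarrow> nat \<Rightarrow> nat set" where
  "Tset n l = {t \<in> {1..2*n}. coprime t (\<Prod>i\<in>{1..l}. pr i)}"

text \<open>L(t) = t * M_l(2n/t) = {t m : m in M_l, t m <= 2n}.\<close>
definition Lset :: "nat \<Rightarrow> nat \<Rightarrow> nat \<Rightarrow> nat set" where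
  "Lset n l t = {t * m | m. m \<in> Msmooth l \<and> t * m \<le> 2 * n}"

definition primitive :: "nat set \<Rightarrow> bool" where
  "primitive A \<longleftrightarrow> (\<forall>a\<in>A. \<forall>b\<in>A. a dvd b \<longrightarrow> a = b)"

definition max_antichain :: "nat set \<Rightarrow> nat set \<Rightarrow> bool" where
  "max_antichain S A \<longleftrightarrow> A \<subseteq> S \<and> primitive A \<and>
     (\<forall>B. B \<subseteq> S \<and> primitive B \<longrightarrow> card B \<le> card A)"

end

theory Submission
  imports Defs
begin

lemma inf_primes: "infinite {p::nat. prime p}"
  using primes_infinite by blast

lemma pr_prime: "prime (pr k)"
  unfolding pr_def using enumerate_in_set[OF inf_primes] by blast

lemma small_prime:
  assumes "prime p" "p < pr (l+1)"
  shows "p \<in> pr ` {1..l}"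
proof -
  obtain j where j: "enumerate {p::nat. prime p} j = p"
    using enumerate_Ex[OF inf_primes] assms(1) by blast
  have "j < l"
  proof (rule ccontr)
    assume "\<not> j < l"
    then have "enumerate {p::nat. prime p} l \<le> enumerate {p::nat. prime p} j"
      using inf_primes by simp
    then show False using assms(2) j by (simp add: pr_def)
  qed
  then have "p = pr (j+1)" using j by (simp add: pr_def)
  then show ?thesis using \<open>j < l\<close> by force
qed

lemma smooth_small:
  assumes "0 < k" "k < pr (l+1)"
  shows "k \<in> Msmooth l"
  unfolding Msmooth_def
proof (safe)
  fix p assume "prime p" "p dvd k"
  then have "p \<le> k" using assms(1) by (simp add: dvd_imp_le)
  then show "p \<in> pr ` {1..l}" using small_prime \<open>prime p\<close> assms(2) by simp
qed (use assms in auto)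

lemma smooth_mult:
  assumes "a \<in> Msmooth l" "b \<in> Msmooth l"
  shows "a * b \<in> Msmooth l"
  using assms unfolding Msmooth_def by (auto simp: prime_dvd_mult_iff)

lemma two_pow_smooth:
  assumes "l \<ge> 1"
  shows "(2::nat) ^ j \<in> Msmooth l"
proof -
  have "pr 1 = 2"
  proof -
    have "pr 1 = enumerate {p::nat. prime p} 0" by (simp add: pr_def)
    also have "\<dots> \<le> enumerate {p::nat. prime p} 0" by simp
    finally have a: "pr 1 \<le> 2"
      using enumerate_Ex[OF inf_primes, of 2]
      by (metis bot_nat_0.extremum enumerate_mono_le_iff inf_primes mem_Collect_eq
          pr_def two_is_prime_nat diff_self_eq_0)
    have "pr 1 \<ge> 2" using pr_prime[of 1] prime_ge_2_nat by blast
    with a show ?thesis by simp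
  qed
  show ?thesis unfolding Msmooth_def
  proof safe
    fix p assume "prime p" "p dvd (2::nat) ^ j"
    then have "p dvd 2" using prime_dvd_power by blast
    then have "p = 2" using \<open>prime p\<close>
      using primes_dvd_imp_eq two_is_prime_nat by blast
    then show "p \<in> pr ` {1..l}" using \<open>pr 1 = 2\<close> assms by force
  qed simp
qed

lemma coprime_T_smooth:
  assumes "t \<in> Tset n l" "m \<in> Msmooth l"
  shows "coprime t m"
proof (rule ccontr)
  assume "\<not> coprime t m"
  then have "gcd t m \<noteq> 1" by (simp add: coprime_iff_gcd_eq_1)
  then obtain p where p: "prime p" "p dvd gcd t m" using prime_factor_nat by blast
  then have "p dvd m" "p dvd t" by auto
  then obtain i where i: "i \<in> {1..l}" "p = pr i" using assms(2) p(1) unfolding Msmooth_def by blast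
  have "p dvd (\<Prod>i\<in>{1..l}. pr i)" using i by (simp add: dvd_prodI)
  moreover have "coprime t (\<Prod>i\<in>{1..l}. pr i)" using assms(1) by (simp add: Tset_def)
  ultimately have "is_unit p" using \<open>p dvd t\<close> coprime_common_divisor by blast
  then show False using p(1) by simp
qed

lemma L_unique:
  assumes "t1 \<in> Tset n l" "t2 \<in> Tset n l" "m1 \<in> Msmooth l" "m2 \<in> Msmooth l"
    "t1 * m1 = t2 * m2"
  shows "t1 = t2"
proof -
  have "t1 dvd t2 * m2" using assms(5) by (metis dvd_triv_left)
  then have a: "t1 dvd t2" using coprime_T_smooth[OF assms(1) assms(4)]
    by (simp add: coprime_dvd_mult_left_iff)
  have "t2 dvd t1 * m1" using assms(5) by (metis dvd_triv_left)
  then have b: "t2 dvd t1" using coprime_T_smooth[OF assms(2) assms(3)]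
    by (simp add: coprime_dvd_mult_left_iff)
  from a b show ?thesis by (simp add: dvd_antisym)
qed

lemma L_finite: "finite (Lset n l t)"
  by (rule finite_subset[of _ "{..2*n}"]) (auto simp: Lset_def)

lemma L_mult:
  assumes "x \<in> Lset n l t" "k \<in> Msmooth l" "x * k \<le> 2 * n"
  shows "x * k \<in> Lset n l t"
  using assms smooth_mult unfolding Lset_def by (auto simp: mult.assoc)

lemma prim_half: "primitive ({n<..2*n} \<inter> X)"
  unfolding primitive_def
proof safe
  fix a b assume h: "a \<in> {n<..2*n}" "b \<in> {n<..2*n}" "a dvd b"
  then obtain k where k: "b = a * k" by blast
  show "a = b"
  proof (cases "k = 1")
    case False
    then have "k = 0 \<or> k \<ge> 2" by linarith
    then show ?thesis
    proof
      assume "k \<ge> 2" then have "a * k \<ge> a * 2" by simp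
      moreover have "n < a" "b \<le> 2 * n" using h by auto
      ultimately show ?thesis using k by linarith
    qed (use h k in simp)
  qed (use k in simp)
qed

lemma width:
  assumes "l \<ge> 1" "t \<in> Tset n l" "max_antichain (Lset n l t) At"
  shows "card At = card (Lset n l t \<inter> {n<..2*n})"
proof (rule antisym)
  have sub: "At \<subseteq> Lset n l t" and prim: "primitive At" using assms(3) max_antichain_def by auto
  have t1: "t \<ge> 1" using assms(2) by (simp add: Tset_def)
  define g where "g x = (LEAST j. n < x * 2 ^ j)" for x :: nat
  define f where "f x = x * 2 ^ g x" for x
  have fprop: "f x \<in> Lset n l t \<inter> {n<..2*n}" if x: "x \<in> At" for x
  proof -
    have xL: "x \<in> Lset n l t" using x sub by blast
    then obtain m where m: "x = t * m" "m \<in> Msmooth l" "x \<le> 2 * n" by (auto simp: Lset_def)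
    have "m > 0" using m(2) by (simp add: Msmooth_def)
    then have xpos: "x \<ge> 1" using t1 m(1) by simp
    have ex: "n < x * 2 ^ n"
    proof -
      have "n < 2 ^ n" by (simp add: less_exp)
      also have "\<dots> \<le> x * 2 ^ n" using xpos by simp
      finally show ?thesis .
    qed
    have gt: "n < f x" unfolding f_def g_def by (rule LeastI[of _ n], rule ex)
    have le: "f x \<le> 2 * n"
    proof (cases "g x")
      case 0 then show ?thesis using m(3) by (simp add: f_def)
    next
      case (Suc j)
      then have "\<not> n < x * 2 ^ j" unfolding g_def using not_less_Least[of j "\<lambda>j. n < x * 2 ^ j"]
        by simp
      then show ?thesis using Suc by (simp add: f_def)
    qed
    have "f x \<in> Lset n l t" unfolding f_def
      by (rule L_mult[OF xL two_pow_smooth[OF assms(1)]]) (use le in \<open>simp add: f_def\<close>)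
    with gt le show ?thesis by simp
  qed
  have inj: "inj_on f At"
  proof (rule inj_onI)
    fix x y assume xy: "x \<in> At" "y \<in> At" "f x = f y"
    have key: "a = b" if "a \<in> At" "b \<in> At" "a * 2 ^ i = b * 2 ^ j" "i \<le> j" for a b i j
    proof -
      have "a * 2 ^ i = (b * 2 ^ (j - i)) * 2 ^ i" using that(3,4)
        by (simp add: power_add[symmetric])
      then have "a = b * 2 ^ (j - i)" by simp
      then have "b dvd a" by simp
      then show "a = b" using prim that(1,2) primitive_def by metis
    qed
    have "x * 2 ^ g x = y * 2 ^ g y" using xy(3) by (simp add: f_def)
    then show "x = y"
      using key[OF xy(1,2)] key[OF xy(2,1)] by (cases "g x \<le> g y") (auto, metis nat_le_linear)
  qed
  show "card At \<le> card (Lset n l t \<inter> {n<..2*n})"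
    by (rule card_inj_on_le[OF inj]) (use fprop L_finite in auto)
next
  have "Lset n l t \<inter> {n<..2*n} \<subseteq> Lset n l t" "primitive (Lset n l t \<inter> {n<..2*n})"
    using prim_half[of n "Lset n l t"] by (auto simp: Int_commute)
  then show "card (Lset n l t \<inter> {n<..2*n}) \<le> card At"
    using assms(3) unfolding max_antichain_def by blast
qed


lemma L_disj:
  assumes "t1 \<in> Tset n l" "t2 \<in> Tset n l" "x \<in> Lset n l t1" "x \<in> Lset n l t2"
  shows "t1 = t2"
  using assms L_unique[OF assms(1,2)] unfolding Lset_def by auto

lemma L_up:
  assumes "a \<in> Lset n l t" "a dvd b" "real (2*n) / real (pr (l+1)) < real a" "b \<le> 2*n" "0 < b"
  shows "b \<in> Lset n l t"
proof -
  obtain k where k: "b = a * k" using assms(2) by blast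
  have kpos: "0 < k" using k assms(5) by (cases k) auto
  have q: "real (pr (l+1)) > 0" using pr_prime[of "l+1"] prime_gt_0_nat by simp
  have "real (2*n) < real a * real (pr (l+1))" using assms(3) q by (simp add: divide_less_eq)
  moreover have "real a * real k \<le> real (2*n)" using assms(4) k by (simp flip: of_nat_mult)
  ultimately have "real a * real k < real a * real (pr (l+1))" by linarith
  then have "k < pr (l+1)" using mult_less_cancel_left_pos[of "real a"] by (cases "a = 0") auto
  then have "k \<in> Msmooth l" using smooth_small kpos by blast
  then show ?thesis using L_mult[OF assms(1)] k assms(4) by simp
qed

theorem claim1:
  fixes n l :: nat and Tstar Astar :: "nat set" and At :: "nat \<Rightarrow> nat set"
  assumes "l \<ge> 1"
    and "Tstar \<subseteq> Tset n l"
    and "\<forall>t\<in>Tstar. max_antichain (Lset n l t) (At t)"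
    and "Astar = (\<Union>t\<in>Tstar. At t)"
    and "\<forall>x\<in>Astar. real (2 * n) / real (pr (l + 1)) < real x \<and> x \<le> 2 * n"
  shows "\<exists>A. primitive A \<and> card A = n \<and> Astar \<subseteq> A \<and>
           (\<forall>x\<in>A. real (2 * n) / real (pr (l + 1)) < real x \<and> x \<le> 2 * n) \<and>
           A \<inter> (\<Union>t\<in>Tstar. Lset n l t) = Astar"
proof -
  define U where "U = (\<Union>t\<in>Tstar. Lset n l t)"
  define H where "H = {n<..2*n}"
  define A where "A = Astar \<union> (H - U)"
  have finT: "finite Tstar" using assms(2) by (rule finite_subset) (auto simp: Tset_def)
  have AtL: "At t \<subseteq> Lset n l t" if "t \<in> Tstar" for t
    using assms(3) that max_antichain_def by blast
  have Atprim: "primitive (At t)" if "t \<in> Tstar" for t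
    using assms(3) that max_antichain_def by blast
  have AsU: "Astar \<subseteq> U" using AtL assms(4) U_def by blast
  have q2: "pr (l+1) \<ge> 2" using pr_prime prime_ge_2_nat by blast
  have Hb: "real (2 * n) / real (pr (l + 1)) < real x" if "x \<in> H" for x
  proof -
    have "real (2 * n) / real (pr (l + 1)) \<le> real (2*n) / 2"
      using q2 by (intro divide_left_mono) auto
    also have "\<dots> < real x" using that H_def by auto
    finally show ?thesis .
  qed
  have bounds: "\<forall>x\<in>A. real (2 * n) / real (pr (l + 1)) < real x \<and> x \<le> 2 * n"
    using assms(5) Hb H_def A_def by auto
  have pos: "0 < x" if "x \<in> A" for x
  proof -
    have "0 \<le> real (2 * n) / real (pr (l + 1))" by simp
    moreover have "real (2 * n) / real (pr (l + 1)) < real x" using bounds that by blast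
    ultimately have "0 < real x" by linarith
    then show ?thesis by simp
  qed
  have prim: "primitive A"
    unfolding primitive_def
  proof (intro ballI impI)
    fix a b assume a: "a \<in> A" and b: "b \<in> A" and ab: "a dvd b"
    have bb: "b \<le> 2*n" "0 < b" using bounds b pos by auto
    show "a = b"
    proof (cases "a \<in> Astar")
      case True
      then obtain t where t: "t \<in> Tstar" "a \<in> At t" using assms(4) by blast
      have bL: "b \<in> Lset n l t"
        using L_up[OF _ ab _ bb] t AtL assms(5) True by blast
      then have "b \<in> U" using t U_def by blast
      then have "b \<in> Astar" using b A_def by blast
      then obtain t' where t': "t' \<in> Tstar" "b \<in> At t'" using assms(4) by blast
      have "t = t'" using L_disj[of t n l t' b] bL t' AtL assms(2) t by blast
      then show ?thesis using Atprim[OF t(1)] t t' ab primitive_def by blast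
    next
      case False
      then have aH: "a \<in> H" "a \<notin> U" using a A_def by auto
      show ?thesis
      proof (cases "b \<in> H")
        case True
        then show ?thesis using prim_half[of n UNIV] aH ab H_def primitive_def by auto
      next
        case False
        then have "b \<in> Astar" using b A_def by auto
        then have "b \<in> U" using AsU by blast
        have "b \<le> 2 * n" using bb by simp
        have "a \<le> b" using ab bb(2) dvd_imp_le by blast
        then have "b \<in> H" using aH H_def \<open>b \<le> 2*n\<close> by auto
        with False show ?thesis by blast
      qed
    qed
  qed
  have finU: "finite U" using finT L_finite U_def by blast
  have finAs: "finite Astar" using AsU finU finite_subset by blast
  have cardA: "card A = card Astar + card (H - U)"
    unfolding A_def by (rule card_Un_disjoint) (use finAs AsU H_def in auto)
  have cH: "card (H - U) = n - card (H \<inter> U)"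
    using card_Diff_subset_Int[of H U] H_def by simp
  have disjL: "\<forall>i\<in>Tstar. \<forall>j\<in>Tstar. i \<noteq> j \<longrightarrow> Lset n l i \<inter> Lset n l j = {}"
    using L_disj assms(2) by blast
  have cHU: "card (H \<inter> U) = (\<Sum>t\<in>Tstar. card (Lset n l t \<inter> H))"
  proof -
    have "H \<inter> U = (\<Union>t\<in>Tstar. Lset n l t \<inter> H)" using U_def by blast
    moreover have "card (\<Union>t\<in>Tstar. Lset n l t \<inter> H) = (\<Sum>t\<in>Tstar. card (Lset n l t \<inter> H))"
    proof (rule card_UN_disjoint[OF finT])
      show "\<forall>i\<in>Tstar. finite (Lset n l i \<inter> H)" using L_finite by simp
      show "\<forall>i\<in>Tstar. \<forall>j\<in>Tstar. i \<noteq> j \<longrightarrow> (Lset n l i \<inter> H) \<inter> (Lset n l j \<inter> H) = {}"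
        using disjL by blast
    qed
    ultimately show ?thesis by simp
  qed
  have cAs: "card Astar = (\<Sum>t\<in>Tstar. card (At t))"
  proof -
    have "card (\<Union>t\<in>Tstar. At t) = (\<Sum>t\<in>Tstar. card (At t))"
    proof (rule card_UN_disjoint[OF finT])
      show "\<forall>i\<in>Tstar. finite (At i)" using L_finite AtL finite_subset by metis
      show "\<forall>i\<in>Tstar. \<forall>j\<in>Tstar. i \<noteq> j \<longrightarrow> At i \<inter> At j = {}"
      proof (intro ballI impI)
        fix i j assume "i \<in> Tstar" "j \<in> Tstar" "i \<noteq> j"
        then have "Lset n l i \<inter> Lset n l j = {}" using disjL by blast
        moreover have "At i \<subseteq> Lset n l i" "At j \<subseteq> Lset n l j" using AtL \<open>i \<in> Tstar\<close> \<open>j \<in> Tstar\<close> by auto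
        ultimately show "At i \<inter> At j = {}" by blast
      qed
    qed
    then show ?thesis using assms(4) by simp
  qed
  have eq: "(\<Sum>t\<in>Tstar. card (At t)) = (\<Sum>t\<in>Tstar. card (Lset n l t \<inter> H))"
    using width[OF assms(1)] assms(2,3) H_def by (intro sum.cong) auto
  have "card (H \<inter> U) \<le> n" using card_mono[of H "H \<inter> U"] H_def by simp
  then have cn: "card A = n" using cardA cH cHU cAs eq by simp
  have "A \<inter> U = Astar" using A_def AsU by blast
  then show ?thesis using prim cn bounds A_def U_def by blast
qed

end
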